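(* For every integer $d\ge 2$ there is a constant $C_d>0$ such that for every positive integer $N$, \[ \mathfrak{C}_d(N) \geq \left(2 + \frac{2}{d+1} - \frac{C_d}{N}\right)(2N+1)^{d^2 + 1}. \]
   Context: For positive integers $d,N$, let $\mathrm{Mat}_d(\mathbb{Z},N)$ denote the set of $d\times d$ matrices with all entries in $[-N,N]\cap\mathbb{Z}$, and let $\mathfrak{C}_d(N)$ be the number of pairs $(A,B)\in \mathrm{Mat}_d(\mathbb{Z},N)^2$ with $AB=BA$. *)

theory Defs
  imports Complex_Main
begin

text \<open>d x d integer matrices represented as functions nat => nat => int, with entries
  indexed by i, j < d and required to be zero outside that range (so that each matrix
  is represented uniquely).\<close>

definition mat_box :: "nat \<Rightarrow> nat \<Rightarrow> (nat \<Rightarrow> nat \<Rightarrow> int) set" where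
  "mat_box d N = {A. (\<forall>i j. i < d \<and> j < d \<longrightarrow> \<bar>A i j\<bar> \<le> int N) \<and>
                     (\<forall>i j. \<not> (i < d \<and> j < d) \<longrightarrow> A i j = 0)}"

definition mat_mult :: "nat \<Rightarrow> (nat \<Rightarrow> nat \<Rightarrow> int) \<Rightarrow> (nat \<Rightarrow> nat \<Rightarrow> int) \<Rightarrow> nat \<Rightarrow> nat \<Rightarrow> int" where
  "mat_mult d A B = (\<lambda>i j. \<Sum>k<d. A i k * B k j)"

definition commuting_count :: "nat \<Rightarrow> nat \<Rightarrow> nat" where
  "commuting_count d N = card {(A, B). A \<in> mat_box d N \<and> B \<in> mat_box d N \<and>
      (\<forall>i<d. \<forall>j<d. mat_mult d A B i j = mat_mult d B A i j)}"

end

theory Submission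
  imports Defs "HOL-Library.FuncSet"
begin

definition gbox :: "nat \<Rightarrow> (nat \<Rightarrow> nat \<Rightarrow> int set) \<Rightarrow> (nat \<Rightarrow> nat \<Rightarrow> int) set" where
  "gbox d S = {A. (\<forall>i j. i < d \<and> j < d \<longrightarrow> A i j \<in> S i j) \<and>
                     (\<forall>i j. \<not> (i < d \<and> j < d) \<longrightarrow> A i j = 0)}"

lemma gbox_eq_image:
  "gbox d S = (\<lambda>g i j. if i < d \<and> j < d then g (i, j) else 0) ` (PiE ({..<d} \<times> {..<d}) (\<lambda>(i,j). S i j))"
proof (rule set_eqI, rule iffI)
  fix A assume A: "A \<in> gbox d S"
  let ?g = "\<lambda>(i,j). if i < d \<and> j < d then A i j else undefined"
  have "?g \<in> PiE ({..<d} \<times> {..<d}) (\<lambda>(i,j). S i j)" using A by (auto simp: gbox_def PiE_def extensional_def)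
  moreover have "A = (\<lambda>i j. if i < d \<and> j < d then ?g (i, j) else 0)" proof (intro ext)
    fix i j show "A i j = (if i < d \<and> j < d then ?g (i, j) else 0)"
      using A unfolding gbox_def by (cases "i < d \<and> j < d") auto
  qed
  ultimately show "A \<in> (\<lambda>g i j. if i < d \<and> j < d then g (i, j) else 0) ` (PiE ({..<d} \<times> {..<d}) (\<lambda>(i,j). S i j))" by blast
next
  fix A assume "A \<in> (\<lambda>g i j. if i < d \<and> j < d then g (i, j) else 0) ` (PiE ({..<d} \<times> {..<d}) (\<lambda>(i,j). S i j))"
  then show "A \<in> gbox d S" by (auto simp: gbox_def PiE_def Pi_def)
qed

lemma gbox_inj:
  "inj_on (\<lambda>g i j. if i < d \<and> j < d then g (i, j) else 0) (PiE ({..<d} \<times> {..<d}) (\<lambda>(i,j). S i j))"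
proof (rule inj_onI)
  fix f g assume f: "f \<in> PiE ({..<d} \<times> {..<d}) (\<lambda>(i,j). S i j)" and g: "g \<in> PiE ({..<d} \<times> {..<d}) (\<lambda>(i,j). S i j)"
    and e: "(\<lambda>i j. if i < d \<and> j < d then f (i, j) else 0) = (\<lambda>i j. if i < d \<and> j < d then g (i, j) else 0)"
  show "f = g"
  proof (rule PiE_ext[OF f g])
    fix x assume "x \<in> {..<d} \<times> {..<d}"
    then obtain i j where x: "x = (i,j)" "i < d" "j < d" by auto
    have "(if i < d \<and> j < d then f (i, j) else 0) = (if i < d \<and> j < d then g (i, j) else 0)"
      using fun_cong[OF fun_cong[OF e, of i], of j] by simp
    then show "f x = g x" using x by simp
  qed
qed

lemma gbox_card:
  assumes "\<And>i j. finite (S i j)"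
  shows "finite (gbox d S) \<and> card (gbox d S) = (\<Prod>i<d. \<Prod>j<d. card (S i j))"
proof -
  have fin: "finite (PiE ({..<d} \<times> {..<d}) (\<lambda>(i,j). S i j))"
    by (rule finite_PiE) (auto simp: assms)
  have "card (gbox d S) = card (PiE ({..<d} \<times> {..<d}) (\<lambda>(i,j). S i j))"
    unfolding gbox_eq_image by (rule card_image[OF gbox_inj])
  also have "\<dots> = (\<Prod>x\<in>{..<d} \<times> {..<d}. card (case x of (i,j) \<Rightarrow> S i j))"
    by (rule card_PiE) auto
  also have "\<dots> = (\<Prod>i<d. \<Prod>j<d. card (S i j))"
    by (simp add: prod.cartesian_product split_def)
  finally show ?thesis using fin unfolding gbox_eq_image by simp
qed

lemma prod_if_diag:
  assumes "i < (d::nat)"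
  shows "(\<Prod>j<d. (if i = j then x else y)) = (x::nat) * y ^ (d - 1)"
proof -
  have "(\<Prod>j<d. (if i = j then x else y)) = (if i = i then x else y) * (\<Prod>j\<in>{..<d} - {i}. (if i = j then x else y))"
    using assms by (intro prod.remove) auto
  also have "(\<Prod>j\<in>{..<d} - {i}. (if i = j then x else y)) = (\<Prod>j\<in>{..<d} - {i}. y)"
    by (rule prod.cong) auto
  also have "\<dots> = y ^ (d - 1)" using assms by simp
  finally show ?thesis by simp
qed

lemma L1: "((n::nat)+1)^(d+1) \<le> n^(d+1) + (d+1)*(n+1)^d"
proof (induction d)
  case 0 then show ?case by simp
next
  case (Suc d)
  have "(n+1)^(Suc d+1) = (n+1)*(n+1)^(d+1)" by simp
  also have "\<dots> \<le> (n+1)*(n^(d+1) + (d+1)*(n+1)^d)" using Suc by (intro mult_left_mono) auto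
  also have "\<dots> = n*n^(d+1) + n^(d+1) + (d+1)*(n+1)^(d+1)" by (simp add: algebra_simps)
  also have "n^(d+1) \<le> (n+1)^(d+1)" by (intro power_mono) auto
  then have "n*n^(d+1) + n^(d+1) + (d+1)*(n+1)^(d+1) \<le> n^(Suc d+1) + (Suc d+1)*(n+1)^(Suc d)" by simp
  finally show ?case .
qed

lemma L2: "(n::nat)^(d+1) \<le> (d+1) * (\<Sum>k\<in>{1..n}. k^d)"
proof (induction n)
  case 0 then show ?case by simp
next
  case (Suc n)
  have "(Suc n)^(d+1) \<le> n^(d+1) + (d+1)*(n+1)^d" using L1[of n d] by simp
  also have "\<dots> \<le> (d+1) * (\<Sum>k\<in>{1..n}. k^d) + (d+1)*(n+1)^d" using Suc by simp
  also have "\<dots> = (d+1) * (\<Sum>k\<in>{1..Suc n}. k^d)" by (simp add: algebra_simps)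
  finally show ?case .
qed

lemma sym_sum: "(\<Sum>c\<in>{-int n..int n}. f (nat \<bar>c\<bar>)) = (f 0::nat) + 2 * (\<Sum>k\<in>{1..n}. f k)"
proof (induction n)
  case 0 then show ?case by simp
next
  case (Suc n)
  have e: "{-int (Suc n)..int (Suc n)} = insert (int (Suc n)) (insert (-int(Suc n)) {-int n..int n})" by auto
  have h: "nat (1 + int n) = Suc n" by auto
  show ?case unfolding e using Suc by (simp add: algebra_simps h)
qed

definition scal :: "nat \<Rightarrow> int \<Rightarrow> nat \<Rightarrow> nat \<Rightarrow> int" where
  "scal d a = (\<lambda>i j. if i < d \<and> j < d \<and> i = j then a else 0)"

definition madd :: "(nat \<Rightarrow> nat \<Rightarrow> int) \<Rightarrow> (nat \<Rightarrow> nat \<Rightarrow> int) \<Rightarrow> nat \<Rightarrow> nat \<Rightarrow> int" where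
  "madd A B = (\<lambda>i j. A i j + B i j)"

lemma mult_scal_left: "i < d \<Longrightarrow> j < d \<Longrightarrow> mat_mult d (scal d a) B i j = a * B i j"
proof -
  assume "i < d" "j < d"
  have "mat_mult d (scal d a) B i j = (\<Sum>k<d. if i = k then a * B k j else 0)"
    unfolding mat_mult_def scal_def using \<open>i < d\<close> by (intro sum.cong) auto
  also have "\<dots> = a * B i j" using \<open>i < d\<close> by (simp add: sum.delta)
  finally show ?thesis .
qed

lemma mult_scal_right: "i < d \<Longrightarrow> j < d \<Longrightarrow> mat_mult d B (scal d a) i j = B i j * a"
proof -
  assume "i < d" "j < d"
  have "mat_mult d B (scal d a) i j = (\<Sum>k<d. if j = k then B i k * a else 0)"
    unfolding mat_mult_def scal_def using \<open>j < d\<close> by (intro sum.cong) auto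
  also have "\<dots> = B i j * a" using \<open>j < d\<close> by (simp add: sum.delta)
  finally show ?thesis .
qed

lemma mult_add_right: "mat_mult d A (madd B C) i j = mat_mult d A B i j + mat_mult d A C i j"
  by (simp add: mat_mult_def madd_def distrib_left sum.distrib)

lemma mult_add_left: "mat_mult d (madd B C) A i j = mat_mult d B A i j + mat_mult d C A i j"
  by (simp add: mat_mult_def madd_def distrib_right sum.distrib)


lemma card_union3:
  assumes "finite X" "finite Y" "finite Z" "finite P"
    "X \<inter> Y \<subseteq> P" "X \<inter> Z \<subseteq> P" "Y \<inter> Z \<subseteq> P"
  shows "card X + card Y + card Z \<le> card (X \<union> Y \<union> Z) + 3 * card P"
proof -
  have fXY: "finite (X \<union> Y)" using assms(1,2) by blast
  have a: "card X + card Y = card (X \<union> Y) + card (X \<inter> Y)" by (rule card_Un_Int[OF assms(1,2)])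
  have b: "card (X \<union> Y) + card Z = card (X \<union> Y \<union> Z) + card ((X \<union> Y) \<inter> Z)" by (rule card_Un_Int[OF fXY assms(3)])
  have c: "card (X \<inter> Y) \<le> card P" by (rule card_mono[OF assms(4) assms(5)])
  have s1: "(X \<union> Y) \<inter> Z \<subseteq> (X \<inter> Z) \<union> (Y \<inter> Z)" by blast
  have "card ((X \<union> Y) \<inter> Z) \<le> card ((X \<inter> Z) \<union> (Y \<inter> Z))"
    by (rule card_mono[OF _ s1]) (use assms(1,2) in blast)
  also have "\<dots> \<le> card (X \<inter> Z) + card (Y \<inter> Z)" by (rule card_Un_le)
  also have "\<dots> \<le> card P + card P"
    by (rule add_mono; rule card_mono[OF assms(4)]; fact)
  finally have d: "card ((X \<union> Y) \<inter> Z) \<le> card P + card P" .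
  show ?thesis using a b c d by simp
qed

theorem lemma1p4:
  shows "\<forall>d::nat. d \<ge> 2 \<longrightarrow> (\<exists>C::real. C > 0 \<and> (\<forall>N::nat. N \<ge> 1 \<longrightarrow>
    real (commuting_count d N) \<ge>
      (2 + 2 / real (d + 1) - C / real N) * real (2 * N + 1) ^ (d\<^sup>2 + 1)))"
proof (intro allI impI)
  fix d :: nat assume d2: "d \<ge> 2"
  have d0: "0 < d" using d2 by simp
  show "\<exists>C::real. C > 0 \<and> (\<forall>N::nat. N \<ge> 1 \<longrightarrow>
    real (commuting_count d N) \<ge>
      (2 + 2 / real (d + 1) - C / real N) * real (2 * N + 1) ^ (d\<^sup>2 + 1))"
  proof (intro exI[of _ 4] conjI allI impI)
    show "(0::real) < 4" by simp
    fix N :: nat assume N1: "N \<ge> 1"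
    define M where "M = 2*N+1"
    define E where "E = {-int N..int N}"
    define box where "box = mat_box d N"
    have absE: "\<And>x::int. (\<bar>x\<bar> \<le> int N) = (x \<in> E)" unfolding E_def by auto
    have box_g: "box = gbox d (\<lambda>_ _. E)" unfolding box_def mat_box_def gbox_def by (simp only: absE)
    have cardE: "card E = M" unfolding E_def M_def by simp
    have finE: "finite E" unfolding E_def by simp
    have boxfin: "finite box" and cardbox: "card box = M^(d*d)"
      using gbox_card[of "\<lambda>_ _. E" d] box_g cardE finE by (simp_all add: power_mult)
    define SB where "SB = scal d ` E"
    have scal_inj: "inj_on (scal d) E"
    proof (rule inj_onI)
      fix a b assume "scal d a = scal d b"
      then have "scal d a 0 0 = scal d b 0 0" by simp
      then show "a = b" using d0 by (simp add: scal_def)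
    qed
    have cardSB: "card SB = M" unfolding SB_def using card_image[OF scal_inj] cardE by simp
    have finSB: "finite SB" unfolding SB_def using finE by simp
    have scal_box: "scal d a \<in> box" if "a \<in> E" for a
      using that unfolding box_def mat_box_def scal_def E_def by auto
    have SB_sub: "SB \<subseteq> box" unfolding SB_def using scal_box by auto
    have to_SB: "A \<in> SB" if "A \<in> box" "A = scal d a" for A a
    proof -
      have "A 0 0 = a" using that(2) d0 by (simp add: scal_def)
      moreover have "\<bar>A 0 0\<bar> \<le> int N" using that(1) d0 unfolding box_def mat_box_def by auto
      ultimately have "a \<in> E" unfolding E_def by auto
      then show ?thesis unfolding SB_def using that(2) by auto
    qed
    define CS where "CS = {(A, B). A \<in> mat_box d N \<and> B \<in> mat_box d N \<and>
      (\<forall>i<d. \<forall>j<d. mat_mult d A B i j = mat_mult d B A i j)}"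
    have count: "commuting_count d N = card CS" unfolding commuting_count_def CS_def by simp
    have CSfin: "finite CS"
      by (rule finite_subset[of _ "box \<times> box"]) (auto simp: CS_def box_def boxfin[unfolded box_def])
    define X where "X = SB \<times> box"
    define Y where "Y = box \<times> SB"
    define P where "P = SB \<times> SB"
    define Bc where "Bc c = gbox d (\<lambda>i j. if i = j then {max (-int N) (-int N - c) .. min (int N) (int N - c)} else E)" for c
    define K where "K = {-int (2*N)..int (2*N)}"
    define Phi where "Phi = (\<lambda>(c::int, A). (A, madd A (scal d c)))"
    define Z where "Z = Phi ` (SIGMA c:K. Bc c)"
    have Bc_both: "A \<in> box \<and> madd A (scal d c) \<in> box" if "A \<in> Bc c" for A c
    proof -
      have h1: "\<And>i j. i < d \<Longrightarrow> j < d \<Longrightarrow> A i j \<in> (if i = j then {max (-int N) (-int N - c) .. min (int N) (int N - c)} else E)"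
        and h2: "\<And>i j. \<not> (i < d \<and> j < d) \<Longrightarrow> A i j = 0"
        using that unfolding Bc_def gbox_def by auto
      have "A \<in> box" unfolding box_def mat_box_def
      proof (intro CollectI conjI allI impI)
        fix i j assume "i < d \<and> j < d"
        then show "\<bar>A i j\<bar> \<le> int N" using h1[of i j] unfolding E_def by (cases "i = j") auto
      next
        fix i j assume "\<not> (i < d \<and> j < d)" then show "A i j = 0" using h2 by auto
      qed
      moreover have "madd A (scal d c) \<in> box" unfolding box_def mat_box_def
      proof (intro CollectI conjI allI impI)
        fix i j assume "i < d \<and> j < d"
        then show "\<bar>madd A (scal d c) i j\<bar> \<le> int N" using h1[of i j] unfolding E_def madd_def scal_def
          by (cases "i = j") auto
      next
        fix i j assume "\<not> (i < d \<and> j < d)" then show "madd A (scal d c) i j = 0" using h2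
          unfolding madd_def scal_def by auto
      qed
      ultimately show ?thesis by simp
    qed
    have Bc_box: "A \<in> box" if "A \<in> Bc c" for A c using Bc_both[OF that] by simp
    have Bc_box2: "madd A (scal d c) \<in> box" if "A \<in> Bc c" for A c using Bc_both[OF that] by simp
    have XCS: "X \<subseteq> CS"
    proof
      fix x assume "x \<in> X"
      then obtain a B where x: "x = (scal d a, B)" "a \<in> E" "B \<in> box" unfolding X_def SB_def by auto
      show "x \<in> CS" unfolding CS_def using x scal_box[OF x(2)]
        by (auto simp: box_def mult_scal_left mult_scal_right)
    qed
    have YCS: "Y \<subseteq> CS"
    proof
      fix x assume "x \<in> Y"
      then obtain a B where x: "x = (B, scal d a)" "a \<in> E" "B \<in> box" unfolding Y_def SB_def by auto
      show "x \<in> CS" unfolding CS_def using x scal_box[OF x(2)]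
        by (auto simp: box_def mult_scal_left mult_scal_right)
    qed
    have ZCS: "Z \<subseteq> CS"
    proof
      fix x assume "x \<in> Z"
      then obtain c A where x: "x = (A, madd A (scal d c))" "A \<in> Bc c" unfolding Z_def Phi_def by auto
      show "x \<in> CS" unfolding CS_def using x Bc_box[OF x(2)] Bc_box2[OF x(2)]
        by (auto simp: box_def mult_scal_left mult_scal_right mult_add_left mult_add_right)
    qed
    have XY: "X \<inter> Y \<subseteq> P" unfolding X_def Y_def P_def by auto
    have XZ: "X \<inter> Z \<subseteq> P"
    proof
      fix x assume "x \<in> X \<inter> Z"
      then obtain c A where x: "x = (A, madd A (scal d c))" "A \<in> Bc c" "A \<in> SB"
        unfolding Z_def Phi_def X_def by auto
      then obtain a where a: "A = scal d a" unfolding SB_def by auto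
      have "madd A (scal d c) = scal d (a + c)" unfolding a madd_def scal_def by (intro ext) auto
      then have "madd A (scal d c) \<in> SB" using to_SB Bc_box2[OF x(2)] by auto
      then show "x \<in> P" using x unfolding P_def by auto
    qed
    have YZ: "Y \<inter> Z \<subseteq> P"
    proof
      fix x assume "x \<in> Y \<inter> Z"
      then obtain c A where x: "x = (A, madd A (scal d c))" "A \<in> Bc c" "madd A (scal d c) \<in> SB"
        unfolding Z_def Phi_def Y_def by auto
      then obtain b where b: "madd A (scal d c) = scal d b" unfolding SB_def by auto
      have "A = scal d (b - c)"
      proof (intro ext)
        fix i j
        have "madd A (scal d c) i j = scal d b i j" using b by simp
        then show "A i j = scal d (b - c) i j" unfolding madd_def scal_def
          by (cases "i < d \<and> j < d \<and> i = j") auto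
      qed
      then have "A \<in> SB" using to_SB Bc_box[OF x(2)] by auto
      then show "x \<in> P" using x unfolding P_def by auto
    qed
    have finBc: "finite (Bc c)" for c unfolding Bc_def using gbox_card[of _ d] finE by auto
    have finK: "finite K" unfolding K_def by simp
    have Phi_inj: "inj_on Phi (SIGMA c:K. Bc c)"
    proof (rule inj_onI)
      fix u v assume "u \<in> (SIGMA c:K. Bc c)" "v \<in> (SIGMA c:K. Bc c)" and e: "Phi u = Phi v"
      obtain c A where u: "u = (c, A)" by fastforce
      obtain c' A' where v: "v = (c', A')" by fastforce
      have AA: "A = A'" using e u v unfolding Phi_def by simp
      have "Phi (c, A) = Phi (c', A')" using e u v by simp
      then have "(A, madd A (scal d c)) = (A', madd A' (scal d c'))" unfolding Phi_def by (simp only: case_prod_conv)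
      then have ee: "madd A (scal d c) = madd A' (scal d c')" by (rule Pair_inject) 
      have "madd A (scal d c) 0 0 = madd A' (scal d c') 0 0" by (simp only: ee)
      then have "c = c'" using AA d0 unfolding madd_def scal_def by simp
      then show "u = v" using u v AA by simp
    qed
    have finX: "finite X" "finite Y" "finite P" unfolding X_def Y_def P_def using finSB boxfin by auto
    have finZ: "finite Z" unfolding Z_def using finK finBc by auto
    define Q where "Q = M^((d-1)*d)"
    define p where "p = M^d"
    define s where "s = (\<Sum>k\<in>{1..2*N}. k^d)"
    have cardBc: "card (Bc c) = (nat (int M - \<bar>c\<bar>) * M^(d-1))^d" if "c \<in> K" for c
    proof -
      define D where "D = {max (-int N) (-int N - c) .. min (int N) (int N - c)}"
      have cD: "card D = nat (int M - \<bar>c\<bar>)" using that unfolding D_def K_def M_def by auto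
      have "card (Bc c) = (\<Prod>i<d. \<Prod>j<d. card (if i = j then D else E))"
        unfolding Bc_def D_def using gbox_card[of _ d] finE by auto
      also have "\<dots> = (\<Prod>i<d. \<Prod>j<d. (if i = j then card D else M))"
        by (simp only: if_distrib[of card] cardE)
      also have "\<dots> = (\<Prod>i<d. card D * M^(d-1))"
        by (rule prod.cong) (auto simp: prod_if_diag)
      also have "\<dots> = (card D * M^(d-1))^d" by simp
      finally show ?thesis using cD by simp
    qed
    have cardZ: "card Z = Q * (p + 2 * s)"
    proof -
      have "card Z = (\<Sum>c\<in>K. card (Bc c))" unfolding Z_def
        using card_image[OF Phi_inj] finK finBc by simp
      also have "\<dots> = (\<Sum>c\<in>K. Q * (M - nat \<bar>c\<bar>)^d)"
      proof (rule sum.cong)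
        fix c assume c: "c \<in> K"
        have n: "nat (int M - \<bar>c\<bar>) = M - nat \<bar>c\<bar>" by auto
        have "card (Bc c) = (M - nat \<bar>c\<bar>)^d * (M^(d-1))^d"
          unfolding cardBc[OF c] n by (rule power_mult_distrib)
        then show "card (Bc c) = Q * (M - nat \<bar>c\<bar>)^d" unfolding Q_def power_mult by simp
      qed simp
      also have "\<dots> = Q * (\<Sum>c\<in>K. (M - nat \<bar>c\<bar>)^d)" by (simp add: sum_distrib_left)
      also have "(\<Sum>c\<in>K. (M - nat \<bar>c\<bar>)^d) = M^d + 2 * (\<Sum>k\<in>{1..2*N}. (M - k)^d)"
        unfolding K_def using sym_sum[of "\<lambda>k. (M - k)^d" "2*N"] by simp
      also have "(\<Sum>k\<in>{1..2*N}. (M - k)^d) = s"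
        unfolding s_def M_def using sum.atLeastAtMost_rev[of "\<lambda>k. k^d" 1 "2*N"] by simp
      finally show ?thesis unfolding p_def by simp
    qed
    have F1: "2 * (M * (Q * p)) + Q * (p + 2 * s) \<le> card CS + 3 * (M * M)"
    proof -
      have dd: "d * d = (d-1)*d + d" using d0 by (cases d) auto
      have "card X = M * (Q * p)" "card Y = M * (Q * p)" "card P = M * M"
        unfolding X_def Y_def P_def using cardSB cardbox finSB boxfin
        by (simp_all add: card_cartesian_product Q_def p_def dd power_add)
      moreover have "card (X \<union> Y \<union> Z) \<le> card CS" using XCS YCS ZCS CSfin by (intro card_mono) auto
      ultimately show ?thesis using card_union3[OF finX(1,2) finZ finX(3) XY XZ YZ] cardZ by linarith
    qed
    have F2: "M * p \<le> (d+1) * s + (d+1) * p"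
      using L1[of "2*N" d] L2[of "2*N" d] unfolding M_def p_def s_def by (simp add: algebra_simps)
    have dd2: "d^2 + 1 = (d-1)*d + d + 1" using d0 by (cases d) (auto simp: power2_eq_square)
    have Mpos: "M \<ge> 1" unfolding M_def by simp
    have F3: "M * M \<le> Q * p"
    proof -
      have "2 * 1 \<le> d * d" using d2 by (intro mult_mono) auto
      then have "M^2 \<le> M^(d^2)" using Mpos by (intro power_increasing) (auto simp: power2_eq_square)
      then show ?thesis using dd2 by (simp add: Q_def p_def power2_eq_square power_add[symmetric])
    qed
    have pow: "real (2 * N + 1) ^ (d\<^sup>2 + 1) = real Q * real p * real M"
      unfolding Q_def p_def M_def dd2 by (simp add: power_add)
    define D where "D = real (d + 1)"
    have Dpos: "D > 0" unfolding D_def by simp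
    have r1: "real M * real p / D - real p \<le> real s"
    proof -
      have "real M * real p \<le> D * real s + D * real p" using F2 unfolding D_def
        by (metis of_nat_add of_nat_le_iff of_nat_mult)
      then show ?thesis using Dpos by (simp add: field_simps)
    qed
    have r2: "real Q * (real M * real p / D - real p) \<le> real Q * real s"
      by (rule mult_left_mono[OF r1]) simp
    have e1: "(2 + 2 / D) * (real Q * real p * real M) = 2 * (real M * (real Q * real p)) + 2 * (real Q * (real M * real p / D - real p)) + 2 * (real Q * real p)"
      using Dpos by (simp add: field_simps)
    have F1r: "2 * (real M * (real Q * real p)) + real Q * (real p + 2 * real s) \<le> real (card CS) + 3 * (real M * real M)"
      using F1 by (metis (mono_tags, lifting) of_nat_add of_nat_le_iff of_nat_mult of_nat_numeral)
    have F3r: "real M * real M \<le> real Q * real p" using F3 by (metis of_nat_le_iff of_nat_mult)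
    have r3: "4 * (real Q * real p) \<le> (4 / real N) * (real Q * real p * real M)"
    proof -
      have "4 \<le> 4 / real N * real M" using N1 unfolding M_def by (simp add: field_simps)
      then have "(real Q * real p) * 4 \<le> (real Q * real p) * (4 / real N * real M)"
        by (intro mult_left_mono) auto
      then show ?thesis by (simp add: algebra_simps)
    qed
    have "(2 + 2 / D - 4 / real N) * (real Q * real p * real M) = (2 + 2 / D) * (real Q * real p * real M) - (4 / real N) * (real Q * real p * real M)"
      by (simp add: algebra_simps)
    also have "\<dots> \<le> real (card CS)"
    proof -
      have F1r': "2 * (real M * (real Q * real p)) + real Q * real p + 2 * (real Q * real s) \<le> real (card CS) + 3 * (real M * real M)"
        using F1r by (simp add: algebra_simps)
      show ?thesis using e1 r2 r3 F1r' F3r by linarith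
    qed
    finally show "(2 + 2 / real (d + 1) - 4 / real N) * real (2 * N + 1) ^ (d\<^sup>2 + 1) \<le> real (commuting_count d N)"
      unfolding pow count D_def .
  qed
qed

end
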